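(* Let $q:\mathsf D\to\mathbb R$ be a query with sensitivity $\Delta q$. Let $x_1,\dots,x_n$ be independent random variables with moment generating functions $M_{x_i}(t)=\mathbb E(e^{tx_i})$, and let $a_1,\dots,a_n$ be real coefficients such that $\frac1b:=\sum_{i=1}^n a_ix_i>0$ almost surely. Then the R$^2$DP Laplace mechanism $\mathcal M_q(d,b)=q(d)+\mathrm{Lap}(b)$ is $\epsilon$-differentially private with $$\epsilon=\ln\left[\frac{\sum_{j=1}^n a_j\,\mathbb E(x_j)}{\sum_{j=1}^n a_j\, M'_{x_j}(-a_j\Delta q)\prod_{i\ne j}M_{x_i}(-a_i\Delta q)}\right].$$
   Context: $\mathrm{Lap}(b)$ is the zero-mean Laplace distribution with density $\frac{1}{2b}e^{-|x|/b}$; in the R$^2$DP Laplace mechanism the scale $b$ is random (independent of the data) and, conditionally on $b$, $\mathrm{Lap}(b)$ noise is added to $q(d)$. Datasets $d,d'$ are adjacent if they differ by the data of one individual; $\Delta q=\max_{d,d'\text{ adjacent}}|q(d)-q(d')|$. A mechanism is $\epsilon$-differentially private if $\mathbb P(\mathcal M(d)\in S)\le e^\epsilon\mathbb P(\mathcal M(d')\in S)$ for all adjacent $d,d'$ and measurable $S$. $M'_{x_j}$ denotes the derivative of $M_{x_j}$. *)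

theory Defs
  imports "HOL-Probability.Probability"
begin

definition laplace_density :: "real \<Rightarrow> real \<Rightarrow> real" where
  "laplace_density b x = exp (- \<bar>x\<bar> / b) / (2 * b)"

definition lap :: "real \<Rightarrow> real measure" where
  "lap b = density lborel (\<lambda>x. ennreal (laplace_density b x))"

text \<open>Output distribution of the R2DP Laplace mechanism with true answer c:
  the random scale b (a random variable on M, independent of the data) is drawn,
  then conditionally on b the value c + Lap(b) is output.\<close>
definition R2DP_laplace :: "'a measure \<Rightarrow> ('a \<Rightarrow> real) \<Rightarrow> real \<Rightarrow> real measure" where
  "R2DP_laplace M b c = M \<bind> (\<lambda>\<omega>. distr (lap (b \<omega>)) borel (\<lambda>z. c + z))"

definition sensitivity :: "('d \<Rightarrow> 'd \<Rightarrow> bool) \<Rightarrow> ('d \<Rightarrow> real) \<Rightarrow> real" where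
  "sensitivity adj q = Sup {\<bar>q d - q d'\<bar> | d d'. adj d d'}"

definition differentially_private ::
  "('d \<Rightarrow> 'd \<Rightarrow> bool) \<Rightarrow> ('d \<Rightarrow> real measure) \<Rightarrow> real \<Rightarrow> bool" where
  "differentially_private adj mech \<epsilon> \<longleftrightarrow>
     (\<forall>d d'. adj d d' \<longrightarrow> (\<forall>S \<in> sets borel.
        measure (mech d) S \<le> exp \<epsilon> * measure (mech d') S))"

definition mgf :: "'a measure \<Rightarrow> ('a \<Rightarrow> real) \<Rightarrow> real \<Rightarrow> real" where
  "mgf M X t = (\<integral>\<omega>. exp (t * X \<omega>) \<partial>M)"

end

theory Submission
  imports Defs
begin

lemma lap_mass:
  fixes y :: real
  shows "(\<integral>\<^sup>+u. ennreal (y * exp (-\<bar>u\<bar>*y) / 2) \<partial>lborel) \<le> 1"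
proof (cases "y \<le> 0")
  case True
  then have "\<And>u. ennreal (y * exp (-\<bar>u\<bar>*y) / 2) = 0"
    by (simp add: ennreal_eq_0_iff mult_nonpos_nonneg)
  then show ?thesis by simp
next
  case False
  then have y: "y > 0" by simp
  have ED: "(\<integral>\<^sup>+u. ennreal (exponential_density y u) \<partial>lborel) = 1"
  proof -
    interpret prob_space "density lborel (exponential_density y)"
      using prob_space_exponential_density[OF y] .
    have "emeasure (density lborel (exponential_density y)) UNIV = 1"
      using emeasure_space_1 by simp
    then show ?thesis by (simp add: emeasure_density)
  qed
  have ED2: "(\<integral>\<^sup>+u. ennreal (exponential_density y (-u)) \<partial>lborel) = 1"
    using nn_integral_real_affine[of "\<lambda>u. ennreal (exponential_density y u)" "-1" 0] ED
    by simp
  have "(\<integral>\<^sup>+u. ennreal (y * exp (-\<bar>u\<bar>*y) / 2) \<partial>lborel) \<le>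
        (\<integral>\<^sup>+u. ennreal (exponential_density y u) * ennreal (1/2) + ennreal (exponential_density y (-u)) * ennreal (1/2) \<partial>lborel)"
  proof (rule nn_integral_mono)
    fix u
    have "y * exp (-\<bar>u\<bar>*y) / 2 \<le> exponential_density y u * (1/2) + exponential_density y (-u) * (1/2)"
      using y by (auto simp: exponential_density_def abs_if)
    then have "ennreal (y * exp (-\<bar>u\<bar>*y) / 2) \<le> ennreal (exponential_density y u * (1/2) + exponential_density y (-u) * (1/2))"
      by (rule ennreal_leI)
    also have "\<dots> = ennreal (exponential_density y u * (1/2)) + ennreal (exponential_density y (-u) * (1/2))"
      by (rule ennreal_plus) (auto simp: exponential_density_nonneg y)
    also have "\<dots> = ennreal (exponential_density y u) * ennreal (1/2) + ennreal (exponential_density y (-u)) * ennreal (1/2)"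
      by (subst (1 2) ennreal_mult) (auto simp: exponential_density_nonneg y)
    finally show "ennreal (y * exp (-\<bar>u\<bar>*y) / 2) \<le> ennreal (exponential_density y u) * ennreal (1/2) + ennreal (exponential_density y (-u)) * ennreal (1/2)" .
  qed
  also have "\<dots> = ennreal (1/2) + ennreal (1/2)"
    by (subst nn_integral_add) (auto simp: nn_integral_multc ED ED2)
  also have "\<dots> = ennreal (1/2 + 1/2)" by (rule ennreal_plus[symmetric]) auto
  also have "\<dots> = 1" by simp
  finally show ?thesis .
qed

lemma lapd: "laplace_density (1/y) u = y * exp(-\<bar>u\<bar>*y)/2"
  by (simp add: laplace_density_def)

lemma kernel_emeasure:
  assumes A: "A \<in> sets borel"
  shows "emeasure (distr (lap (1/y)) borel (\<lambda>z. c + z)) A =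
    (\<integral>\<^sup>+z. ennreal (y * exp (-\<bar>z - c\<bar>*y)/2) * indicator A z \<partial>lborel)"
proof -
  have m: "(\<lambda>z. c + z) \<in> measurable (lap (1/y)) borel"
    unfolding lap_def by (simp add: measurable_cong_sets[OF sets_density refl])
  have "emeasure (distr (lap (1/y)) borel (\<lambda>z. c + z)) A = emeasure (lap (1/y)) ((\<lambda>z. c + z) -` A)"
    by (subst emeasure_distr[OF m A]) (simp add: lap_def)
  also have "\<dots> = (\<integral>\<^sup>+x. ennreal (y * exp(-\<bar>x\<bar>*y)/2) * indicator ((\<lambda>z. c + z) -` A) x \<partial>lborel)"
  proof -
    have pre: "(\<lambda>z. c + z) -` A \<in> sets borel"
      using measurable_sets[of "\<lambda>z. c+z" borel borel A] A by simp
    show ?thesis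
      unfolding lap_def lapd using pre by (subst emeasure_density) auto
  qed
  also have "\<dots> = (\<integral>\<^sup>+z. ennreal (y * exp (-\<bar>z - c\<bar>*y)/2) * indicator A z \<partial>lborel)"
    using nn_integral_real_affine[of "\<lambda>z. ennreal (y * exp (-\<bar>z - c\<bar>*y)/2) * indicator A z" 1 c] A
    by (simp add: indicator_def)
  finally show ?thesis .
qed

lemma kernel_subprob: "subprob_space (distr (lap (1/y)) borel (\<lambda>z. c + z))"
proof (rule subprob_spaceI)
  have "emeasure (distr (lap (1/y)) borel (\<lambda>z. c + z)) UNIV =
    (\<integral>\<^sup>+z. ennreal (y * exp (-\<bar>z - c\<bar>*y)/2) \<partial>lborel)"
    by (subst kernel_emeasure) auto
  also have "\<dots> = (\<integral>\<^sup>+z. ennreal (y * exp (-\<bar>c + 1 * z - c\<bar>*y)/2) \<partial>lborel)"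
    using nn_integral_real_affine[of "\<lambda>z. ennreal (y * exp (-\<bar>z - c\<bar>*y)/2)" 1 c] by simp
  also have "\<dots> \<le> 1" using lap_mass[of y] by simp
  finally show "emeasure (distr (lap (1/y)) borel (\<lambda>z. c + z)) (space (distr (lap (1/y)) borel (\<lambda>z. c + z))) \<le> 1"
    by simp
qed simp

lemma kernel_meas:
  assumes [measurable]: "Y \<in> borel_measurable M"
  shows "(\<lambda>\<omega>. distr (lap (1 / Y \<omega>)) borel (\<lambda>z. c + z)) \<in> measurable M (subprob_algebra borel)"
proof (rule measurable_subprob_algebra)
  fix A :: "real set" assume A[measurable]: "A \<in> sets borel"
  have "(\<lambda>\<omega>. \<integral>\<^sup>+z. ennreal (Y \<omega> * exp (-\<bar>z - c\<bar>*Y \<omega>)/2) * indicator A z \<partial>lborel) \<in> borel_measurable M"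
    by measurable
  then show "(\<lambda>\<omega>. emeasure (distr (lap (1 / Y \<omega>)) borel (\<lambda>z. c + z)) A) \<in> borel_measurable M"
    by (subst kernel_emeasure[OF A]) 
qed (auto intro: kernel_subprob)

lemma Phi_int:
  fixes Y :: "'a \<Rightarrow> real" and d :: real
  assumes Y[measurable]: "Y \<in> borel_measurable M" and intY: "integrable M Y"
    and pos: "AE \<omega> in M. Y \<omega> > 0" and d: "d \<ge> 0"
  shows "integrable M (\<lambda>\<omega>. Y \<omega> * exp (- (d * Y \<omega>)))"
proof (rule Bochner_Integration.integrable_bound[OF intY])
  show "AE \<omega> in M. norm (Y \<omega> * exp (- (d * Y \<omega>))) \<le> norm (Y \<omega>)"
    using pos
  proof eventually_elim
    case (elim \<omega>)
    have "0 \<le> d * Y \<omega>" using d elim by (meson less_imp_le mult_nonneg_nonneg)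
    then have "exp (- (d * Y \<omega>)) \<le> 1" by simp
    then show ?case using elim by (simp add: abs_mult)
  qed
qed simp

lemma R2DP_bound:
  fixes Y :: "'a \<Rightarrow> real"
  assumes M: "prob_space M" and Y[measurable]: "Y \<in> borel_measurable M" and intY: "integrable M Y"
    and pos: "AE \<omega> in M. Y \<omega> > 0" and K: "K \<ge> 0"
    and bound: "\<And>z. (\<integral>\<omega>. Y \<omega> * exp (- (\<bar>z - c\<bar> * Y \<omega>)) \<partial>M)
                  \<le> K * (\<integral>\<omega>. Y \<omega> * exp (- (\<bar>z - c'\<bar> * Y \<omega>)) \<partial>M)"
    and S[measurable]: "S \<in> sets borel"
  shows "measure (R2DP_laplace M (\<lambda>\<omega>. 1 / Y \<omega>) c) S \<le> K * measure (R2DP_laplace M (\<lambda>\<omega>. 1 / Y \<omega>) c') S"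
proof -
  interpret prob_space M by (fact M)
  interpret PS: pair_sigma_finite M lborel
    by (intro pair_sigma_finite.intro) (auto intro: sigma_finite_measure_axioms lborel.sigma_finite_measure_axioms)
  define \<Phi> where "\<Phi> d = (\<integral>\<omega>. Y \<omega> * exp (- (d * Y \<omega>)) \<partial>M)" for d
  have inner: "(\<integral>\<^sup>+\<omega>. ennreal (Y \<omega> * exp (-\<bar>z - e\<bar>*Y \<omega>)/2) * indicator S z \<partial>M)
       = ennreal (\<Phi> \<bar>z - e\<bar> / 2) * indicator S z" for z e
  proof -
    have "(\<integral>\<^sup>+\<omega>. ennreal (Y \<omega> * exp (-\<bar>z - e\<bar>*Y \<omega>)/2) \<partial>M) = ennreal (\<integral>\<omega>. Y \<omega> * exp (-\<bar>z - e\<bar>*Y \<omega>)/2 \<partial>M)"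
    proof (rule nn_integral_eq_integral)
      show "integrable M (\<lambda>\<omega>. Y \<omega> * exp (-\<bar>z - e\<bar>*Y \<omega>)/2)"
        using Phi_int[OF Y intY pos, of "\<bar>z - e\<bar>"] by simp
      show "AE \<omega> in M. 0 \<le> Y \<omega> * exp (-\<bar>z - e\<bar>*Y \<omega>)/2"
        using pos by eventually_elim simp
    qed
    also have "\<dots> = ennreal (\<Phi> \<bar>z - e\<bar> / 2)"
      unfolding \<Phi>_def by simp
    finally show ?thesis by (simp add: nn_integral_multc)
  qed
  have measE: "(\<lambda>z. ennreal (\<Phi> \<bar>z - e\<bar> / 2) * indicator S z) \<in> borel_measurable lborel" for e
  proof -
    have "(\<lambda>z. \<integral>\<^sup>+\<omega>. ennreal (Y \<omega> * exp (-\<bar>z - e\<bar>*Y \<omega>)/2) * indicator S z \<partial>M) \<in> borel_measurable lborel"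
      by measurable
    then show ?thesis by (simp only: inner)
  qed
  have E: "emeasure (R2DP_laplace M (\<lambda>\<omega>. 1 / Y \<omega>) e) S =
      (\<integral>\<^sup>+z. ennreal (\<Phi> \<bar>z - e\<bar> / 2) * indicator S z \<partial>lborel)" for e
  proof -
    have "emeasure (R2DP_laplace M (\<lambda>\<omega>. 1 / Y \<omega>) e) S =
      (\<integral>\<^sup>+\<omega>. emeasure (distr (lap (1 / Y \<omega>)) borel (\<lambda>z. e + z)) S \<partial>M)"
      unfolding R2DP_laplace_def
      by (rule emeasure_bind[OF not_empty kernel_meas[OF Y] S])
    also have "\<dots> = (\<integral>\<^sup>+\<omega>. \<integral>\<^sup>+z. ennreal (Y \<omega> * exp (-\<bar>z - e\<bar>*Y \<omega>)/2) * indicator S z \<partial>lborel \<partial>M)"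
      by (simp only: kernel_emeasure[OF S])
    also have "\<dots> = (\<integral>\<^sup>+z. \<integral>\<^sup>+\<omega>. ennreal (Y \<omega> * exp (-\<bar>z - e\<bar>*Y \<omega>)/2) * indicator S z \<partial>M \<partial>lborel)"
      by (rule PS.Fubini'[symmetric]) measurable
    also have "\<dots> = (\<integral>\<^sup>+z. ennreal (\<Phi> \<bar>z - e\<bar> / 2) * indicator S z \<partial>lborel)"
      by (simp only: inner)
    finally show ?thesis .
  qed
  have le: "emeasure (R2DP_laplace M (\<lambda>\<omega>. 1 / Y \<omega>) c) S \<le> ennreal K * emeasure (R2DP_laplace M (\<lambda>\<omega>. 1 / Y \<omega>) c') S"
  proof -
    have "emeasure (R2DP_laplace M (\<lambda>\<omega>. 1 / Y \<omega>) c) S \<le>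
        (\<integral>\<^sup>+z. ennreal K * (ennreal (\<Phi> \<bar>z - c'\<bar> / 2) * indicator S z) \<partial>lborel)"
      unfolding E
    proof (rule nn_integral_mono)
      fix z
      have "\<Phi> \<bar>z - c\<bar> / 2 \<le> K * (\<Phi> \<bar>z - c'\<bar> / 2)"
        using bound[of z] unfolding \<Phi>_def by simp
      then have "ennreal (\<Phi> \<bar>z - c\<bar> / 2) \<le> ennreal (K * (\<Phi> \<bar>z - c'\<bar> / 2))"
        by (rule ennreal_leI)
      also have "\<dots> = ennreal K * ennreal (\<Phi> \<bar>z - c'\<bar> / 2)"
        using K by (metis ennreal_mult' ennreal_mult'')
      finally have "ennreal (\<Phi> \<bar>z - c\<bar> / 2) \<le> ennreal K * ennreal (\<Phi> \<bar>z - c'\<bar> / 2)" .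
      then show "ennreal (\<Phi> \<bar>z - c\<bar> / 2) * indicator S z \<le> ennreal K * (ennreal (\<Phi> \<bar>z - c'\<bar> / 2) * indicator S z)"
        by (auto simp: indicator_def)
    qed
    also have "\<dots> = ennreal K * emeasure (R2DP_laplace M (\<lambda>\<omega>. 1 / Y \<omega>) c') S"
      unfolding E by (rule nn_integral_cmult) (rule measE)
    finally show ?thesis .
  qed
  have fin: "emeasure (R2DP_laplace M (\<lambda>\<omega>. 1 / Y \<omega>) c') S < \<infinity>"
  proof -
    have "emeasure (R2DP_laplace M (\<lambda>\<omega>. 1 / Y \<omega>) c') S =
      (\<integral>\<^sup>+\<omega>. emeasure (distr (lap (1 / Y \<omega>)) borel (\<lambda>z. c' + z)) S \<partial>M)"
      unfolding R2DP_laplace_def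
      by (rule emeasure_bind[OF not_empty kernel_meas[OF Y] S])
    also have "\<dots> \<le> (\<integral>\<^sup>+\<omega>. 1 \<partial>M)"
      by (rule nn_integral_mono) (rule subprob_space.subprob_emeasure_le_1[OF kernel_subprob])
    also have "\<dots> = 1" by (simp add: emeasure_space_1)
    finally show ?thesis by (simp add: order_le_less_trans)
  qed
  have "measure (R2DP_laplace M (\<lambda>\<omega>. 1 / Y \<omega>) c) S \<le> enn2real (ennreal K * emeasure (R2DP_laplace M (\<lambda>\<omega>. 1 / Y \<omega>) c') S)"
    unfolding measure_def using le fin by (intro enn2real_mono) (auto simp: ennreal_mult_less_top)
  also have "\<dots> = K * measure (R2DP_laplace M (\<lambda>\<omega>. 1 / Y \<omega>) c') S"
    using K by (simp add: enn2real_mult measure_def)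
  finally show ?thesis .
qed

lemma Phi_pos:
  fixes Y :: "'a \<Rightarrow> real" and d :: real
  assumes M: "prob_space M" and Y[measurable]: "Y \<in> borel_measurable M" and intY: "integrable M Y"
    and pos: "AE \<omega> in M. Y \<omega> > 0" and d: "d \<ge> 0"
  shows "(\<integral>\<omega>. Y \<omega> * exp (- (d * Y \<omega>)) \<partial>M) > 0"
proof -
  interpret prob_space M by (fact M)
  have i: "integrable M (\<lambda>\<omega>. Y \<omega> * exp (- (d * Y \<omega>)))" by (rule Phi_int[OF Y intY pos d])
  have nn: "AE \<omega> in M. 0 \<le> Y \<omega> * exp (- (d * Y \<omega>))" using pos by eventually_elim simp
  have "(\<integral>\<omega>. Y \<omega> * exp (- (d * Y \<omega>)) \<partial>M) \<noteq> 0"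
  proof
    assume "(\<integral>\<omega>. Y \<omega> * exp (- (d * Y \<omega>)) \<partial>M) = 0"
    then have "AE \<omega> in M. Y \<omega> * exp (- (d * Y \<omega>)) = 0"
      using integral_nonneg_eq_0_iff_AE[OF i nn] by simp
    then have "AE \<omega> in M. False" using pos by eventually_elim simp
    then show False by (simp add: AE_False)
  qed
  moreover have "(\<integral>\<omega>. Y \<omega> * exp (- (d * Y \<omega>)) \<partial>M) \<ge> 0" using nn by (rule integral_nonneg_AE)
  ultimately show ?thesis by simp
qed

lemma Phi_mono:
  fixes Y :: "'a \<Rightarrow> real" and d d' :: real
  assumes Y[measurable]: "Y \<in> borel_measurable M" and intY: "integrable M Y"
    and pos: "AE \<omega> in M. Y \<omega> > 0" and d: "0 \<le> d" "d \<le> d'"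
  shows "(\<integral>\<omega>. Y \<omega> * exp (- (d' * Y \<omega>)) \<partial>M) \<le> (\<integral>\<omega>. Y \<omega> * exp (- (d * Y \<omega>)) \<partial>M)"
proof (rule integral_mono_AE)
  show "integrable M (\<lambda>\<omega>. Y \<omega> * exp (- (d' * Y \<omega>)))" using d by (intro Phi_int[OF Y intY pos]) simp
  show "integrable M (\<lambda>\<omega>. Y \<omega> * exp (- (d * Y \<omega>)))" using d by (intro Phi_int[OF Y intY pos]) simp
  show "AE \<omega> in M. Y \<omega> * exp (- (d' * Y \<omega>)) \<le> Y \<omega> * exp (- (d * Y \<omega>))"
    using pos
  proof eventually_elim
    case (elim \<omega>)
    have "d * Y \<omega> \<le> d' * Y \<omega>" using elim d by (intro mult_right_mono) auto
    then show ?case using elim by (intro mult_left_mono) auto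
  qed
qed

lemma Phi_cheb:
  fixes Y :: "'a \<Rightarrow> real" and d1 D :: real
  assumes M: "prob_space M" and Y[measurable]: "Y \<in> borel_measurable M" and intY: "integrable M Y"
    and pos: "AE \<omega> in M. Y \<omega> > 0" and d1: "d1 \<ge> 0" and D: "D \<ge> 0"
  defines "\<Phi> \<equiv> \<lambda>d. (\<integral>\<omega>. Y \<omega> * exp (- (d * Y \<omega>)) \<partial>M)"
  shows "\<Phi> d1 * \<Phi> D \<le> \<Phi> 0 * \<Phi> (d1 + D)"
proof (cases "D = 0")
  case True then show ?thesis by simp
next
  case False
  with D have Dp: "D > 0" by simp
  have P0: "\<Phi> 0 > 0" unfolding \<Phi>_def by (rule Phi_pos[OF M Y intY pos]) simp
  have PD: "\<Phi> D > 0" unfolding \<Phi>_def by (rule Phi_pos[OF M Y intY pos D])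
  define c0 where "c0 = \<Phi> D / \<Phi> 0"
  have c0: "c0 > 0" using P0 PD by (simp add: c0_def)
  define y0 where "y0 = - ln c0 / D"
  define A where "A = exp (- (d1 * y0))"
  define B where "B = exp (- (D * y0))"
  have B: "B = c0" using Dp c0 by (simp add: B_def y0_def)
  have int: "integrable M (\<lambda>\<omega>. Y \<omega> * exp (- (d * Y \<omega>)))" if "d \<ge> 0" for d
    using Phi_int[OF Y intY pos that] .
  have i1: "integrable M (\<lambda>\<omega>. Y \<omega> * exp (- ((d1 + D) * Y \<omega>)))" using d1 D by (intro int) simp
  have i2: "integrable M (\<lambda>\<omega>. Y \<omega> * exp (- (d1 * Y \<omega>)))" using d1 by (intro int)
  have i3: "integrable M (\<lambda>\<omega>. Y \<omega> * exp (- (D * Y \<omega>)))" using D by (intro int)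
  have "0 \<le> (\<integral>\<omega>. Y \<omega> * (exp (- (d1 * Y \<omega>)) - A) * (exp (- (D * Y \<omega>)) - B) \<partial>M)"
  proof (rule integral_nonneg_AE)
    show "AE \<omega> in M. 0 \<le> Y \<omega> * (exp (- (d1 * Y \<omega>)) - A) * (exp (- (D * Y \<omega>)) - B)"
      using pos
    proof eventually_elim
      case (elim \<omega>)
      have "0 \<le> (exp (- (d1 * Y \<omega>)) - A) * (exp (- (D * Y \<omega>)) - B)"
      proof (cases "Y \<omega> \<le> y0")
        case True
        have "d1 * Y \<omega> \<le> d1 * y0" using True d1 by (intro mult_left_mono)
        then have a: "A \<le> exp (- (d1 * Y \<omega>))" by (simp add: A_def)
        have "D * Y \<omega> \<le> D * y0" using True D by (intro mult_left_mono)
        then have b: "B \<le> exp (- (D * Y \<omega>))" by (simp add: B_def)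
        show ?thesis using a b by simp
      next
        case False
        have "d1 * y0 \<le> d1 * Y \<omega>" using False d1 by (intro mult_left_mono) auto
        then have a: "exp (- (d1 * Y \<omega>)) \<le> A" by (simp add: A_def)
        have "D * y0 \<le> D * Y \<omega>" using False D by (intro mult_left_mono) auto
        then have b: "exp (- (D * Y \<omega>)) \<le> B" by (simp add: B_def)
        show ?thesis using a b by (simp add: mult_nonpos_nonpos)
      qed
      then show ?case using elim by (metis mult.assoc less_imp_le mult_nonneg_nonneg)
    qed
  qed
  also have "(\<integral>\<omega>. Y \<omega> * (exp (- (d1 * Y \<omega>)) - A) * (exp (- (D * Y \<omega>)) - B) \<partial>M)
     = (\<integral>\<omega>. Y \<omega> * exp (- ((d1 + D) * Y \<omega>)) - B * (Y \<omega> * exp (- (d1 * Y \<omega>)))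
             - A * (Y \<omega> * exp (- (D * Y \<omega>))) + A * B * Y \<omega> \<partial>M)"
  proof (rule Bochner_Integration.integral_cong[OF refl])
    fix \<omega>
    have "exp (- (d1 * Y \<omega>)) * exp (- (D * Y \<omega>)) = exp (- ((d1 + D) * Y \<omega>))"
      by (simp add: exp_add[symmetric] algebra_simps)
    then show "Y \<omega> * (exp (- (d1 * Y \<omega>)) - A) * (exp (- (D * Y \<omega>)) - B) =
      Y \<omega> * exp (- ((d1 + D) * Y \<omega>)) - B * (Y \<omega> * exp (- (d1 * Y \<omega>)))
             - A * (Y \<omega> * exp (- (D * Y \<omega>))) + A * B * Y \<omega>"
      by (simp add: algebra_simps)
  qed
  also have "\<dots> = \<Phi> (d1 + D) - B * \<Phi> d1 - A * \<Phi> D + A * B * \<Phi> 0"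
    unfolding \<Phi>_def using i1 i2 i3 intY
    by (simp add: Bochner_Integration.integral_add Bochner_Integration.integral_diff)
  finally have "0 \<le> \<Phi> (d1 + D) - B * \<Phi> d1 - A * \<Phi> D + A * B * \<Phi> 0" .
  moreover have "A * \<Phi> D = A * B * \<Phi> 0" using B P0 by (simp add: c0_def)
  ultimately have "B * \<Phi> d1 \<le> \<Phi> (d1 + D)" by simp
  then have "\<Phi> 0 * (B * \<Phi> d1) \<le> \<Phi> 0 * \<Phi> (d1 + D)" using P0 by (intro mult_left_mono) auto
  then show ?thesis using B P0 by (simp add: c0_def field_simps)
qed

lemma exp_sub_one_bound: "\<bar>exp (u::real) - 1\<bar> \<le> \<bar>u\<bar> * exp \<bar>u\<bar>"
proof (cases "u \<ge> 0")
  case True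
  have "1 - u \<le> exp (-u)" using exp_ge_add_one_self[of "-u"] by simp
  then have "exp u * (1 - u) \<le> exp u * exp (-u)" by (intro mult_left_mono) auto
  then have "exp u - u * exp u \<le> 1" by (simp add: exp_minus field_simps)
  then show ?thesis using True by (simp add: algebra_simps)
next
  case False
  have "1 + u \<le> exp u" by (rule exp_ge_add_one_self)
  moreover have "exp u \<le> 1" using False by simp
  moreover have "1 \<le> exp (-u)" using False by simp
  moreover have "-u \<le> (-u) * exp (-u)" using False \<open>1 \<le> exp (-u)\<close>
    by (metis mult.right_neutral mult_left_mono neg_0_le_iff_le not_le order_less_imp_le)
  moreover have "\<bar>exp u - 1\<bar> = 1 - exp u" "\<bar>u\<bar> * exp \<bar>u\<bar> = (-u) * exp (-u)" using False by auto
  ultimately show ?thesis by linarith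
qed

lemma quot_bound:
  fixes x s t0 \<delta> :: real
  assumes "\<delta> > 0" "\<bar>s\<bar> \<le> \<delta>" "s \<noteq> 0"
  shows "\<bar>(exp ((t0 + s) * x) - exp (t0 * x)) / s\<bar> \<le> (exp ((t0 + 2*\<delta>) * x) + exp ((t0 - 2*\<delta>) * x)) / \<delta>"
    and "\<bar>x * exp (t0 * x)\<bar> \<le> (exp ((t0 + 2*\<delta>) * x) + exp ((t0 - 2*\<delta>) * x)) / \<delta>"
proof -
  have L2: "\<bar>x\<bar> \<le> exp (\<delta> * \<bar>x\<bar>) / \<delta>"
  proof -
    have "\<delta> * \<bar>x\<bar> \<le> exp (\<delta> * \<bar>x\<bar>)" using exp_ge_add_one_self[of "\<delta> * \<bar>x\<bar>"] by linarith
    then show ?thesis using assms(1) by (simp add: field_simps)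
  qed
  have L3: "exp (t0 * x) * exp (2 * \<delta> * \<bar>x\<bar>) \<le> exp ((t0 + 2*\<delta>) * x) + exp ((t0 - 2*\<delta>) * x)"
  proof (cases "x \<ge> 0")
    case True
    then have "exp (t0 * x) * exp (2 * \<delta> * \<bar>x\<bar>) = exp ((t0 + 2*\<delta>) * x)"
      by (simp add: exp_add[symmetric] algebra_simps)
    then show ?thesis by simp
  next
    case False
    then have "exp (t0 * x) * exp (2 * \<delta> * \<bar>x\<bar>) = exp ((t0 - 2*\<delta>) * x)"
      by (simp add: exp_add[symmetric] algebra_simps)
    then show ?thesis by simp
  qed
  have M: "exp (t0 * x) * (\<bar>x\<bar> * exp (\<delta> * \<bar>x\<bar>)) \<le> (exp ((t0 + 2*\<delta>) * x) + exp ((t0 - 2*\<delta>) * x)) / \<delta>"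
  proof -
    have "\<bar>x\<bar> * exp (\<delta> * \<bar>x\<bar>) \<le> exp (\<delta> * \<bar>x\<bar>) / \<delta> * exp (\<delta> * \<bar>x\<bar>)"
      using L2 by (intro mult_right_mono) auto
    also have "\<dots> = exp (2 * \<delta> * \<bar>x\<bar>) / \<delta>" by (simp add: exp_add[symmetric])
    finally have "exp (t0 * x) * (\<bar>x\<bar> * exp (\<delta> * \<bar>x\<bar>)) \<le> exp (t0 * x) * (exp (2 * \<delta> * \<bar>x\<bar>) / \<delta>)"
      by (intro mult_left_mono) auto
    also have "\<dots> \<le> (exp ((t0 + 2*\<delta>) * x) + exp ((t0 - 2*\<delta>) * x)) / \<delta>"
      using L3 assms(1) by (simp add: divide_right_mono)
    finally show ?thesis .
  qed
  have "exp ((t0 + s) * x) - exp (t0 * x) = exp (t0 * x) * (exp (s * x) - 1)"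
    by (simp add: distrib_right exp_add algebra_simps)
  then have "\<bar>(exp ((t0 + s) * x) - exp (t0 * x)) / s\<bar> = exp (t0 * x) * (\<bar>exp (s * x) - 1\<bar> / \<bar>s\<bar>)"
    by (simp add: abs_mult abs_divide)
  also have "\<dots> \<le> exp (t0 * x) * (\<bar>x\<bar> * exp (\<delta> * \<bar>x\<bar>))"
  proof (intro mult_left_mono)
    have "\<bar>exp (s * x) - 1\<bar> \<le> \<bar>s * x\<bar> * exp \<bar>s * x\<bar>" by (rule exp_sub_one_bound)
    also have "\<dots> \<le> \<bar>s\<bar> * (\<bar>x\<bar> * exp (\<delta> * \<bar>x\<bar>))"
    proof -
      have "\<bar>s * x\<bar> \<le> \<delta> * \<bar>x\<bar>" using assms by (simp add: abs_mult mult_right_mono)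
      then have "exp \<bar>s * x\<bar> \<le> exp (\<delta> * \<bar>x\<bar>)" by simp
      then have "\<bar>s * x\<bar> * exp \<bar>s * x\<bar> \<le> \<bar>s * x\<bar> * exp (\<delta> * \<bar>x\<bar>)" by (intro mult_left_mono) auto
      then show ?thesis by (simp add: abs_mult mult.assoc)
    qed
    finally show "\<bar>exp (s * x) - 1\<bar> / \<bar>s\<bar> \<le> \<bar>x\<bar> * exp (\<delta> * \<bar>x\<bar>)"
      using assms(3) by (simp add: divide_le_eq mult.commute)
  qed simp
  finally show "\<bar>(exp ((t0 + s) * x) - exp (t0 * x)) / s\<bar> \<le> (exp ((t0 + 2*\<delta>) * x) + exp ((t0 - 2*\<delta>) * x)) / \<delta>"
    using M by linarith
  have "1 \<le> exp (\<delta> * \<bar>x\<bar>)" using assms(1) by simp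
  then have "\<bar>x\<bar> * 1 \<le> \<bar>x\<bar> * exp (\<delta> * \<bar>x\<bar>)" by (intro mult_left_mono) auto
  then have "exp (t0 * x) * (\<bar>x\<bar> * 1) \<le> exp (t0 * x) * (\<bar>x\<bar> * exp (\<delta> * \<bar>x\<bar>))" by (rule mult_left_mono) simp
  then have "\<bar>x * exp (t0 * x)\<bar> \<le> exp (t0 * x) * (\<bar>x\<bar> * exp (\<delta> * \<bar>x\<bar>))"
    by (simp add: abs_mult mult.commute)
  then show "\<bar>x * exp (t0 * x)\<bar> \<le> (exp ((t0 + 2*\<delta>) * x) + exp ((t0 - 2*\<delta>) * x)) / \<delta>"
    using M by linarith
qed

lemma mgf_deriv:
  fixes X :: "'a \<Rightarrow> real" and t0 e :: real
  assumes X[measurable]: "X \<in> borel_measurable M" and e: "e > 0"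
    and int: "\<And>t. \<bar>t - t0\<bar> < e \<Longrightarrow> integrable M (\<lambda>\<omega>. exp (t * X \<omega>))"
  shows "integrable M (\<lambda>\<omega>. X \<omega> * exp (t0 * X \<omega>))"
    and "deriv (mgf M X) t0 = (\<integral>\<omega>. X \<omega> * exp (t0 * X \<omega>) \<partial>M)"
proof -
  define \<delta> where "\<delta> = e / 4"
  have \<delta>: "\<delta> > 0" using e by (simp add: \<delta>_def)
  define w where "w \<omega> = (exp ((t0 + 2*\<delta>) * X \<omega>) + exp ((t0 - 2*\<delta>) * X \<omega>)) / \<delta>" for \<omega>
  have intw: "integrable M w"
    unfolding w_def using e
    by (intro integrable_divide Bochner_Integration.integrable_add int) (auto simp: \<delta>_def)
  show intf: "integrable M (\<lambda>\<omega>. X \<omega> * exp (t0 * X \<omega>))"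
  proof (rule Bochner_Integration.integrable_bound[OF intw])
    show "AE \<omega> in M. norm (X \<omega> * exp (t0 * X \<omega>)) \<le> norm (w \<omega>)"
    proof (rule AE_I2)
      fix \<omega>
      have "norm (X \<omega> * exp (t0 * X \<omega>)) \<le> w \<omega>"
        using quot_bound(2)[where x="X \<omega>" and s=\<delta> and \<delta>=\<delta>] \<delta> by (simp add: w_def)
      then show "norm (X \<omega> * exp (t0 * X \<omega>)) \<le> norm (w \<omega>)" by simp
    qed
  qed simp
  define F where "F = mgf M X"
  have int0: "integrable M (\<lambda>\<omega>. exp (t0 * X \<omega>))" using int e by simp
  have "(F has_real_derivative (\<integral>\<omega>. X \<omega> * exp (t0 * X \<omega>) \<partial>M)) (at t0)"
    unfolding has_field_derivative_iff tendsto_at_iff_sequentially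
  proof (intro allI impI)
    fix T :: "nat \<Rightarrow> real"
    assume T: "\<forall>i. T i \<in> UNIV - {t0}" and lim: "T \<longlonglongrightarrow> t0"
    obtain N where N: "\<And>n. n \<ge> N \<Longrightarrow> norm (T n - t0) < \<delta>"
      using lim \<delta> unfolding LIMSEQ_iff by blast
    define S where "S i = T (i + N)" for i
    have S1: "\<bar>S i - t0\<bar> < \<delta>" for i using N[of "i + N"] by (simp add: S_def)
    have S2: "S i \<noteq> t0" for i using T by (auto simp: S_def)
    have Slim: "S \<longlonglongrightarrow> t0" unfolding S_def using lim by (rule LIMSEQ_ignore_initial_segment)
    define s where "s i \<omega> = (exp (S i * X \<omega>) - exp (t0 * X \<omega>)) / (S i - t0)" for i \<omega>
    have ints: "integrable M (\<lambda>\<omega>. exp (S i * X \<omega>))" for i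
      using S1[of i] e by (intro int) (auto simp: \<delta>_def)
    have "(\<lambda>i. integral\<^sup>L M (s i)) \<longlonglongrightarrow> (\<integral>\<omega>. X \<omega> * exp (t0 * X \<omega>) \<partial>M)"
    proof (rule integral_dominated_convergence[OF _ _ intw])
      show "(\<lambda>\<omega>. X \<omega> * exp (t0 * X \<omega>)) \<in> borel_measurable M" by simp
      show "s i \<in> borel_measurable M" for i unfolding s_def by simp
      show "AE \<omega> in M. (\<lambda>i. s i \<omega>) \<longlonglongrightarrow> X \<omega> * exp (t0 * X \<omega>)"
      proof (rule AE_I2)
        fix \<omega>
        have "((\<lambda>t. exp (t * X \<omega>)) has_real_derivative X \<omega> * exp (t0 * X \<omega>)) (at t0)"
          by (auto intro!: derivative_eq_intros)
        then have "((\<lambda>y. (exp (y * X \<omega>) - exp (t0 * X \<omega>)) / (y - t0)) \<longlongrightarrow> X \<omega> * exp (t0 * X \<omega>)) (at t0)"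
          unfolding has_field_derivative_iff .
        then have "((\<lambda>y. (exp (y * X \<omega>) - exp (t0 * X \<omega>)) / (y - t0)) \<circ> S) \<longlonglongrightarrow> X \<omega> * exp (t0 * X \<omega>)"
          unfolding tendsto_at_iff_sequentially using S2 Slim by auto
        then show "(\<lambda>i. s i \<omega>) \<longlonglongrightarrow> X \<omega> * exp (t0 * X \<omega>)"
          by (simp add: s_def o_def)
      qed
      show "AE \<omega> in M. norm (s i \<omega>) \<le> w \<omega>" for i
      proof (rule AE_I2)
        fix \<omega>
        have "\<bar>(exp ((t0 + (S i - t0)) * X \<omega>) - exp (t0 * X \<omega>)) / (S i - t0)\<bar> \<le> w \<omega>"
          unfolding w_def using S1[of i] S2[of i] by (intro quot_bound(1)) auto
        then show "norm (s i \<omega>) \<le> w \<omega>" by (simp add: s_def)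
      qed
    qed
    moreover have "integral\<^sup>L M (s i) = (F (S i) - F t0) / (S i - t0)" for i
      unfolding s_def F_def mgf_def using ints[of i] int0
      by (simp add: Bochner_Integration.integral_diff)
    ultimately have "(\<lambda>i. (F (T (i + N)) - F t0) / (T (i + N) - t0)) \<longlonglongrightarrow> (\<integral>\<omega>. X \<omega> * exp (t0 * X \<omega>) \<partial>M)"
      by (simp add: S_def)
    then show "((\<lambda>y. (F y - F t0) / (y - t0)) \<circ> T) \<longlonglongrightarrow> (\<integral>\<omega>. X \<omega> * exp (t0 * X \<omega>) \<partial>M)"
      unfolding o_def by (rule LIMSEQ_offset)
  qed
  then show "deriv (mgf M X) t0 = (\<integral>\<omega>. X \<omega> * exp (t0 * X \<omega>) \<partial>M)"
    unfolding F_def by (rule DERIV_imp_deriv)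
qed

theorem corollary4p1:
  fixes M :: "'a measure" and x :: "nat \<Rightarrow> 'a \<Rightarrow> real" and a :: "nat \<Rightarrow> real"
    and n :: nat and adj :: "'d \<Rightarrow> 'd \<Rightarrow> bool" and q :: "'d \<Rightarrow> real"
  assumes "prob_space M"
    and "bdd_above {\<bar>q d - q d'\<bar> | d d'. adj d d'}"
    and "prob_space.indep_vars M (\<lambda>_. borel) x {1..n}"
    and "\<And>j. j \<in> {1..n} \<Longrightarrow> integrable M (x j)"
    and "\<And>j. j \<in> {1..n} \<Longrightarrow> \<exists>e>0. \<forall>t. \<bar>t + a j * sensitivity adj q\<bar> < e \<longrightarrow>
             integrable M (\<lambda>\<omega>. exp (t * x j \<omega>))"
    and "AE \<omega> in M. (\<Sum>i=1..n. a i * x i \<omega>) > 0"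
  shows "differentially_private adj
           (\<lambda>d. R2DP_laplace M (\<lambda>\<omega>. 1 / (\<Sum>i=1..n. a i * x i \<omega>)) (q d))
           (ln ((\<Sum>j=1..n. a j * prob_space.expectation M (x j)) /
                (\<Sum>j=1..n. a j * deriv (mgf M (x j)) (- a j * sensitivity adj q) *
                   (\<Prod>i\<in>{1..n} - {j}. mgf M (x i) (- a i * sensitivity adj q)))))"
proof -
  interpret prob_space M by (fact assms(1))
  note indep = assms(3)
  have xm[measurable]: "x i \<in> borel_measurable M" if "i \<in> {1..n}" for i
    using indep that unfolding indep_vars_def by auto
  define Y where "Y \<omega> = (\<Sum>i=1..n. a i * x i \<omega>)" for \<omega>
  have Ym[measurable]: "Y \<in> borel_measurable M"
    unfolding Y_def by (intro borel_measurable_sum borel_measurable_times) (auto intro: xm)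
  have intY: "integrable M Y"
    unfolding Y_def by (intro Bochner_Integration.integrable_sum integrable_mult_right assms(4)) auto
  have posY: "AE \<omega> in M. Y \<omega> > 0" using assms(6) by (simp add: Y_def)
  define \<Phi> where "\<Phi> d = (\<integral>\<omega>. Y \<omega> * exp (- (d * Y \<omega>)) \<partial>M)" for d
  define \<Delta> where "\<Delta> = sensitivity adj q"
  show ?thesis
    unfolding differentially_private_def
  proof (intro allI impI ballI)
    fix d d' S assume adjd: "adj d d'" and S: "S \<in> sets (borel :: real measure)"
    have dq: "\<bar>q d - q d'\<bar> \<le> \<Delta>"
      unfolding \<Delta>_def sensitivity_def using adjd assms(2) by (intro cSup_upper) auto
    then have D0: "\<Delta> \<ge> 0" by linarith
    have P0: "\<Phi> 0 > 0" unfolding \<Phi>_def by (rule Phi_pos[OF assms(1) Ym intY posY]) simp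
    have PD: "\<Phi> \<Delta> > 0" unfolding \<Phi>_def by (rule Phi_pos[OF assms(1) Ym intY posY D0])
    have num: "(\<Sum>j=1..n. a j * expectation (x j)) = \<Phi> 0"
      unfolding \<Phi>_def Y_def using assms(4)
      by (simp add: Bochner_Integration.integral_sum integrable_mult_right)
    define t where "t i = - a i * \<Delta>" for i
    define E where "E \<omega> = (\<Prod>i\<in>{1..n}. exp (t i * x i \<omega>))" for \<omega>
    define P where "P j \<omega> = x j \<omega> * exp (t j * x j \<omega>) * (\<Prod>i\<in>{1..n}-{j}. exp (t i * x i \<omega>))" for j \<omega>
    have intE: "integrable M (\<lambda>\<omega>. exp (t i * x i \<omega>))" if iI: "i \<in> {1..n}" for i
    proof -
      obtain e where e: "e > 0" "\<forall>s. \<bar>s + a i * sensitivity adj q\<bar> < e \<longrightarrow> integrable M (\<lambda>\<omega>. exp (s * x i \<omega>))"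
        using assms(5)[OF iI] by blast
      have H: "\<bar>(- a i * sensitivity adj q) + a i * sensitivity adj q\<bar> < e" using e(1) by simp
      have "integrable M (\<lambda>\<omega>. exp ((- a i * sensitivity adj q) * x i \<omega>))" by (rule e(2)[rule_format, OF H])
      then show ?thesis by (simp add: t_def \<Delta>_def)
    qed
    have der: "deriv (mgf M (x j)) (t j) = (\<integral>\<omega>. x j \<omega> * exp (t j * x j \<omega>) \<partial>M)"
      and intD: "integrable M (\<lambda>\<omega>. x j \<omega> * exp (t j * x j \<omega>))" if j: "j \<in> {1..n}" for j
    proof -
      obtain e where e: "e > 0" "\<forall>s. \<bar>s + a j * sensitivity adj q\<bar> < e \<longrightarrow> integrable M (\<lambda>\<omega>. exp (s * x j \<omega>))"
        using assms(5)[OF j] by blast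
      have "\<And>s. \<bar>s - t j\<bar> < e \<Longrightarrow> integrable M (\<lambda>\<omega>. exp (s * x j \<omega>))"
        using e(2) by (auto simp: t_def \<Delta>_def)
      from mgf_deriv[OF xm[OF j] e(1) this] show "deriv (mgf M (x j)) (t j) = (\<integral>\<omega>. x j \<omega> * exp (t j * x j \<omega>) \<partial>M)"
        and "integrable M (\<lambda>\<omega>. x j \<omega> * exp (t j * x j \<omega>))" by auto
    qed
    have indP: "(\<integral>\<omega>. P j \<omega> \<partial>M) = (\<integral>\<omega>. x j \<omega> * exp (t j * x j \<omega>) \<partial>M) * (\<Prod>i\<in>{1..n}-{j}. mgf M (x i) (t i))"
      and intP: "integrable M (P j)" if j: "j \<in> {1..n}" for j
    proof -
      define f where "f i v = (if i = j then v * exp (t j * v) else exp (t i * v))" for i v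
      have ind2: "indep_vars (\<lambda>_. borel) (\<lambda>i \<omega>. f i (x i \<omega>)) {1..n}"
        by (rule indep_vars_compose2[OF indep]) (simp add: f_def)
      have intf: "integrable M (\<lambda>\<omega>. f i (x i \<omega>))" if "i \<in> {1..n}" for i
        using intD[OF j] intE[OF that] by (cases "i = j") (simp_all add: f_def)
      have Pf: "P j \<omega> = (\<Prod>i\<in>{1..n}. f i (x i \<omega>))" for \<omega>
      proof -
        have "(\<Prod>i\<in>{1..n}. f i (x i \<omega>)) = f j (x j \<omega>) * (\<Prod>i\<in>{1..n}-{j}. f i (x i \<omega>))"
          using j by (simp add: prod.remove)
        also have "(\<Prod>i\<in>{1..n}-{j}. f i (x i \<omega>)) = (\<Prod>i\<in>{1..n}-{j}. exp (t i * x i \<omega>))"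
          by (rule prod.cong) (auto simp: f_def)
        finally show ?thesis by (simp add: P_def f_def)
      qed
      have "(\<integral>\<omega>. P j \<omega> \<partial>M) = (\<Prod>i\<in>{1..n}. \<integral>\<omega>. f i (x i \<omega>) \<partial>M)"
        unfolding Pf by (rule indep_vars_lebesgue_integral[OF _ ind2 intf]) auto
      also have "\<dots> = (\<integral>\<omega>. f j (x j \<omega>) \<partial>M) * (\<Prod>i\<in>{1..n}-{j}. \<integral>\<omega>. f i (x i \<omega>) \<partial>M)"
        using j by (simp add: prod.remove)
      also have "(\<Prod>i\<in>{1..n}-{j}. \<integral>\<omega>. f i (x i \<omega>) \<partial>M) = (\<Prod>i\<in>{1..n}-{j}. mgf M (x i) (t i))"
        by (rule prod.cong) (auto simp: f_def mgf_def)
      finally show "(\<integral>\<omega>. P j \<omega> \<partial>M) = (\<integral>\<omega>. x j \<omega> * exp (t j * x j \<omega>) \<partial>M) * (\<Prod>i\<in>{1..n}-{j}. mgf M (x i) (t i))"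
        by (simp add: f_def)
      show "integrable M (P j)"
        unfolding Pf[abs_def] by (rule indep_vars_integrable[OF _ ind2 intf]) auto
    qed
    have den: "(\<Sum>j=1..n. a j * deriv (mgf M (x j)) (- a j * sensitivity adj q) *
                   (\<Prod>i\<in>{1..n} - {j}. mgf M (x i) (- a i * sensitivity adj q))) = \<Phi> \<Delta>"
    proof -
      have "(\<Sum>j=1..n. a j * deriv (mgf M (x j)) (- a j * sensitivity adj q) *
                   (\<Prod>i\<in>{1..n} - {j}. mgf M (x i) (- a i * sensitivity adj q)))
          = (\<Sum>j=1..n. a j * (\<integral>\<omega>. P j \<omega> \<partial>M))"
        by (rule sum.cong[OF refl]) (simp only: \<Delta>_def[symmetric] t_def[symmetric] der indP mult.assoc)
      also have "\<dots> = (\<integral>\<omega>. (\<Sum>j=1..n. a j * P j \<omega>) \<partial>M)"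
        using intP by (simp add: Bochner_Integration.integral_sum integrable_mult_right)
      also have "\<dots> = \<Phi> \<Delta>"
        unfolding \<Phi>_def
      proof (rule Bochner_Integration.integral_cong[OF refl])
        fix \<omega>
        have Eeq: "E \<omega> = exp (- (\<Delta> * Y \<omega>))"
          unfolding E_def Y_def t_def
          by (simp add: exp_sum[symmetric] sum_distrib_left sum_negf algebra_simps)
        have "P j \<omega> = x j \<omega> * E \<omega>" if "j \<in> {1..n}" for j
          using that by (simp add: P_def E_def prod.remove mult.assoc)
        then have "(\<Sum>j=1..n. a j * P j \<omega>) = (\<Sum>j=1..n. a j * x j \<omega> * E \<omega>)"
          by (intro sum.cong) (auto simp: mult.assoc)
        also have "\<dots> = Y \<omega> * E \<omega>" by (simp add: Y_def sum_distrib_right)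
        finally show "(\<Sum>j=1..n. a j * P j \<omega>) = Y \<omega> * exp (- (\<Delta> * Y \<omega>))" by (simp add: Eeq)
      qed
      finally show ?thesis .
    qed
    define K where "K = \<Phi> 0 / \<Phi> \<Delta>"
    have K: "K > 0" using P0 PD by (simp add: K_def)
    have bound: "\<Phi> \<bar>z - q d\<bar> \<le> K * \<Phi> \<bar>z - q d'\<bar>" for z
    proof -
      have "\<Phi> \<bar>z - q d\<bar> * \<Phi> \<Delta> \<le> \<Phi> 0 * \<Phi> (\<bar>z - q d\<bar> + \<Delta>)"
        unfolding \<Phi>_def by (rule Phi_cheb[OF assms(1) Ym intY posY _ D0]) simp
      also have "\<Phi> (\<bar>z - q d\<bar> + \<Delta>) \<le> \<Phi> \<bar>z - q d'\<bar>"
        unfolding \<Phi>_def using dq by (intro Phi_mono[OF Ym intY posY]) auto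
      then have "\<Phi> 0 * \<Phi> (\<bar>z - q d\<bar> + \<Delta>) \<le> \<Phi> 0 * \<Phi> \<bar>z - q d'\<bar>"
        using P0 by (intro mult_left_mono) auto
      finally have "\<Phi> \<bar>z - q d\<bar> * \<Phi> \<Delta> \<le> \<Phi> 0 * \<Phi> \<bar>z - q d'\<bar>" .
      then show ?thesis using PD by (simp add: K_def field_simps)
    qed
    have "measure (R2DP_laplace M (\<lambda>\<omega>. 1 / Y \<omega>) (q d)) S \<le> K * measure (R2DP_laplace M (\<lambda>\<omega>. 1 / Y \<omega>) (q d')) S"
      by (rule R2DP_bound[OF assms(1) Ym intY posY _ _ S]) (use K bound in \<open>auto simp: \<Phi>_def\<close>)
    moreover have "exp (ln ((\<Sum>j=1..n. a j * expectation (x j)) /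
                (\<Sum>j=1..n. a j * deriv (mgf M (x j)) (- a j * sensitivity adj q) *
                   (\<Prod>i\<in>{1..n} - {j}. mgf M (x i) (- a i * sensitivity adj q))))) = K"
      using K unfolding num den K_def by simp
    ultimately show "measure (R2DP_laplace M (\<lambda>\<omega>. 1 / (\<Sum>i = 1..n. a i * x i \<omega>)) (q d)) S
        \<le> exp (ln ((\<Sum>j = 1..n. a j * expectation (x j)) /
                (\<Sum>j = 1..n. a j * deriv (mgf M (x j)) (- a j * sensitivity adj q) *
                   (\<Prod>i\<in>{1..n} - {j}. mgf M (x i) (- a i * sensitivity adj q))))) *
           measure (R2DP_laplace M (\<lambda>\<omega>. 1 / (\<Sum>i = 1..n. a i * x i \<omega>)) (q d')) S"
      by (simp add: Y_def)
  qed
qed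


thm_deps corollary4p1

end
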